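(* Let $\rho$ be a Drinfeld $\mathbb{F}_q[t]$-module over $\overline{k}$. If $u_1,\dots,u_n\in\mathbb{C}_\infty$ are linearly independent over $k$, then the functions $f_{u_1}(t),\dots,f_{u_n}(t)$ are linearly independent over $\mathbb{F}_q(t)$.
   Context: $\mathbb{F}_q$ is the field with $q$ elements, $\theta,t$ independent variables, $k=\mathbb{F}_q(\theta)$, $\mathbb{C}_\infty$ the completion of an algebraic closure of $\mathbb{F}_q((1/\theta))$, $\overline{k}$ the algebraic closure of $k$ in $\mathbb{C}_\infty$. $\tau$ is the $q$-power Frobenius; $\rho$ is an $\mathbb{F}_q$-algebra map $\mathbb{F}_q[t]\to\overline{k}[\tau]$ with $\rho_t=\theta+\kappa_1\tau+\dots+\kappa_r\tau^r$, $\kappa_r\ne0$, acting on $\mathbb{C}_\infty$ by $(\sum c_i\tau^i)(x)=\sum c_ix^{q^i}$. $\exp_\rho(z)=z+\sum_{i\ge1}\alpha_iz^{q^i}$ is the unique entire $\mathbb{F}_q$-linear series with $\exp_\rho(\theta z)=\rho_t(\exp_\rho(z))$. For $u\in\mathbb{C}_\infty$, $f_u(t)=\sum_{m\ge0}\exp_\rho(u/\theta^{m+1})t^m=\sum_{i\ge0}\alpha_iu^{q^i}/(\theta^{q^i}-t)$ ($\alpha_0=1$), a power series in $t$ converging on $|t|_\infty\le1$ that extends to a meromorphic function on $\mathbb{C}_\infty$. *)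

theory Defs
  imports "HOL-Computational_Algebra.Polynomial_FPS" "HOL-Computational_Algebra.Formal_Laurent_Series"
begin

text \<open>The finite field F_q inside a field of characteristic p (q a power of p):
  the roots of X^q - X.\<close>
definition dr_Fq :: "nat \<Rightarrow> 'c::field set" where
  "dr_Fq q = {x. x ^ q = x}"

definition dr_k :: "nat \<Rightarrow> 'c::field \<Rightarrow> 'c set" where
  "dr_k q \<theta> = {poly a \<theta> / poly b \<theta> | a b.
      (\<forall>i. coeff a i \<in> dr_Fq q) \<and> (\<forall>i. coeff b i \<in> dr_Fq q) \<and> b \<noteq> 0}"

definition dr_kbar :: "nat \<Rightarrow> 'c::field \<Rightarrow> 'c set" where
  "dr_kbar q \<theta> = {x. \<exists>P. P \<noteq> 0 \<and> (\<forall>i. coeff P i \<in> dr_k q \<theta>) \<and> poly P x = 0}"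

definition dr_absval :: "('c::field \<Rightarrow> real) \<Rightarrow> bool" where
  "dr_absval av \<longleftrightarrow> (\<forall>x. 0 \<le> av x) \<and> (\<forall>x. av x = 0 \<longleftrightarrow> x = 0)
     \<and> (\<forall>x y. av (x * y) = av x * av y) \<and> (\<forall>x y. av (x + y) \<le> max (av x) (av y))"

definition dr_complete :: "('c::field \<Rightarrow> real) \<Rightarrow> bool" where
  "dr_complete av \<longleftrightarrow> (\<forall>X::nat \<Rightarrow> 'c.
      (\<forall>\<epsilon>>0. \<exists>N. \<forall>m\<ge>N. \<forall>n\<ge>N. av (X m - X n) < \<epsilon>) \<longrightarrow>
      (\<exists>L. (\<lambda>n. av (X n - L)) \<longlonglongrightarrow> 0))"

text \<open>(C, av, theta) is a model of C_infinity: C is an algebraically closed field of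
  characteristic p, q = p^e, complete w.r.t. a non-archimedean absolute value av with
  av theta > 1 (so av restricted to k = F_q(theta) is the infinite place), and the
  algebraic closure kbar of k in C is dense in C.  These properties characterise the
  completion of an algebraic closure of F_q((1/theta)) up to isometric isomorphism
  (and normalisation of av).\<close>
definition Cinf_model :: "nat \<Rightarrow> nat \<Rightarrow> nat \<Rightarrow> 'c::field \<Rightarrow> ('c \<Rightarrow> real) \<Rightarrow> bool" where
  "Cinf_model p e q \<theta> av \<longleftrightarrow>
     prime p \<and> 0 < e \<and> q = p ^ e \<and> of_nat p = (0::'c) \<and>
     (\<forall>P::'c poly. 0 < degree P \<longrightarrow> (\<exists>x. poly P x = 0)) \<and>
     dr_absval av \<and> dr_complete av \<and> 1 < av \<theta> \<and>
     (\<forall>x. \<forall>\<epsilon>>0. \<exists>y\<in>dr_kbar q \<theta>. av (x - y) < \<epsilon>)"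

text \<open>Drinfeld module rho_t = theta + kappa_1 tau + ... + kappa_r tau^r over kbar.\<close>
definition drinfeld_data :: "nat \<Rightarrow> 'c::field \<Rightarrow> nat \<Rightarrow> (nat \<Rightarrow> 'c) \<Rightarrow> bool" where
  "drinfeld_data q \<theta> r \<kappa> \<longleftrightarrow> 1 \<le> r \<and> \<kappa> r \<noteq> 0 \<and> (\<forall>j\<in>{1..r}. \<kappa> j \<in> dr_kbar q \<theta>)"

text \<open>Coefficients alpha_i of exp_rho, determined by comparing coefficients of z^(q^i) in
  exp_rho(theta z) = rho_t(exp_rho z):
  alpha_i theta^(q^i) = theta alpha_i + sum_(j=1..min i r) kappa_j alpha_(i-j)^(q^j).\<close>
fun dexp_coeff :: "nat \<Rightarrow> 'c::field \<Rightarrow> nat \<Rightarrow> (nat \<Rightarrow> 'c) \<Rightarrow> nat \<Rightarrow> 'c" where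
  "dexp_coeff q \<theta> r \<kappa> 0 = 1"
| "dexp_coeff q \<theta> r \<kappa> (Suc i) =
     (\<Sum>j\<in>{1..min (Suc i) r}. \<kappa> j * (dexp_coeff q \<theta> r \<kappa> (Suc i - j)) ^ (q ^ j))
       / (\<theta> ^ (q ^ Suc i) - \<theta>)"

definition av_sums :: "('c::field \<Rightarrow> real) \<Rightarrow> (nat \<Rightarrow> 'c) \<Rightarrow> 'c \<Rightarrow> bool" where
  "av_sums av f s \<longleftrightarrow> (\<lambda>N. av (s - (\<Sum>i<N. f i))) \<longlonglongrightarrow> 0"

definition dexp :: "nat \<Rightarrow> 'c::field \<Rightarrow> ('c \<Rightarrow> real) \<Rightarrow> nat \<Rightarrow> (nat \<Rightarrow> 'c) \<Rightarrow> 'c \<Rightarrow> 'c" where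
  "dexp q \<theta> av r \<kappa> z = (THE s. av_sums av (\<lambda>i. dexp_coeff q \<theta> r \<kappa> i * z ^ (q ^ i)) s)"

definition f_u :: "nat \<Rightarrow> 'c::field \<Rightarrow> ('c \<Rightarrow> real) \<Rightarrow> nat \<Rightarrow> (nat \<Rightarrow> 'c) \<Rightarrow> 'c \<Rightarrow> 'c fps" where
  "f_u q \<theta> av r \<kappa> u = Abs_fps (\<lambda>m. dexp q \<theta> av r \<kappa> (u / \<theta> ^ (m + 1)))"

definition dr_Fqt :: "nat \<Rightarrow> 'c::field fls set" where
  "dr_Fqt q = {fps_to_fls (fps_of_poly a) / fps_to_fls (fps_of_poly b) | a b.
      (\<forall>i. coeff a i \<in> dr_Fq q) \<and> (\<forall>i. coeff b i \<in> dr_Fq q) \<and> b \<noteq> 0}"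

end

theory Submission
  imports Defs
begin


lemma avD:
  assumes "dr_absval av"
  shows av0: "av 0 = 0" and av1: "av 1 = 1" and avneg: "av (-x) = av x"
    and avmult: "av (x*y) = av x * av y" and avadd: "av (x+y) \<le> max (av x) (av y)"
    and avnn: "0 \<le> av x" and aveq0: "av x = 0 \<longleftrightarrow> x = 0"
proof -
  show a0: "av 0 = 0" using assms unfolding dr_absval_def by auto
  show "av (x*y) = av x * av y" "av (x+y) \<le> max (av x) (av y)" "0 \<le> av x" "av x = 0 \<longleftrightarrow> x = 0"
    using assms unfolding dr_absval_def by auto
  have m: "\<And>x y. av (x*y) = av x * av y" and z: "\<And>x. av x = 0 \<longleftrightarrow> x = 0" and nn: "\<And>x. 0 \<le> av x"
    using assms unfolding dr_absval_def by auto
  have "av 1 = av 1 * av 1" using m[of 1 1] by simp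
  moreover have "av 1 \<noteq> 0" using z by simp
  ultimately show a1: "av 1 = 1" by simp
  have "av (-1) * av (-1) = 1" using m[of "-1" "-1"] a1 by simp
  hence "av (-1) = 1" using nn[of "-1"]
    using square_eq_1_iff[of "av (-1)"] by auto
  thus "av (-x) = av x" using m[of "-1" x] by simp
qed

lemma avdiff: "dr_absval av \<Longrightarrow> av (x - y) \<le> max (av x) (av y)"
  using avadd[of av x "-y"] avneg[of av y] by simp

lemma avdivide: "dr_absval av \<Longrightarrow> av (x / y) = av x / av y"
proof (cases "y = 0")
  case True assume a: "dr_absval av" thus ?thesis using True av0[OF a] by simp
next
  case False assume a: "dr_absval av"
  have "av (x/y) * av y = av x" using avmult[OF a, of "x/y" y] False by simp
  moreover have "av y \<noteq> 0" using aveq0[OF a] False by simp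
  ultimately show ?thesis by (simp add: field_simps)
qed

lemma avpow: "dr_absval av \<Longrightarrow> av (x ^ n) = av x ^ n"
  by (induction n) (simp_all add: av1 avmult)

lemma avcomm: "dr_absval av \<Longrightarrow> av (x - y) = av (y - x)"
  using avneg[of av "x - y"] by simp

lemma avstrict:
  assumes a: "dr_absval av" and lt: "av x < av y" shows "av (x + y) = av y"
proof -
  have "av (x+y) \<le> av y" using avadd[OF a, of x y] lt by simp
  moreover have "av y \<le> max (av (x+y)) (av x)" using avdiff[OF a, of "x+y" x] by simp
  ultimately show ?thesis using lt by linarith
qed

lemma avsum:
  assumes a: "dr_absval av" and "finite S" and "0 \<le> C" and "\<forall>s\<in>S. av (f s) \<le> C"
  shows "av (sum f S) \<le> C"
  using assms(2,4)
proof (induction S rule: finite_induct)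
  case empty thus ?case using av0[OF a] assms(3) by simp
next
  case (insert x F)
  have "max (av (f x)) (av (sum f F)) \<le> C" using insert by simp
  hence "av (f x + sum f F) \<le> C" using avadd[OF a, of "f x" "sum f F"] by (rule order_trans[rotated])
  thus ?case using insert.hyps by simp
qed

lemma avFq:
  assumes a: "dr_absval av" and q: "2 \<le> q" and x: "x \<in> dr_Fq q" and nz: "x \<noteq> 0"
  shows "av x = 1"
proof -
  have "x ^ q = x" using x by (simp add: dr_Fq_def)
  hence "av x ^ q = av x" using avpow[OF a, of x q] by simp
  moreover have "av x > 0" using avnn[OF a, of x] aveq0[OF a, of x] nz by (simp add: less_le)
  moreover obtain k where k: "q = Suc k" "1 \<le> k" using q by (metis Suc_1 Suc_le_D Suc_le_mono)
  ultimately have "av x * av x ^ k = av x * 1" by simp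
  hence "av x ^ k = 1 ^ k" using `av x > 0` by simp
  thus ?thesis using `av x > 0` k by (metis power_eq_imp_eq_base zero_le_one less_eq_real_def less_le_trans zero_less_one)
qed

lemma avpoly:
  assumes a: "dr_absval av" and q: "2 \<le> q" and th: "1 < av \<theta>"
  shows "P \<noteq> 0 \<Longrightarrow> (\<forall>i. coeff P i \<in> dr_Fq q) \<Longrightarrow> av (poly P \<theta>) = av \<theta> ^ degree P"
proof (induction P rule: pCons_induct)
  case 0 thus ?case by simp
next
  case (pCons c P)
  show ?case
  proof (cases "P = 0")
    case True
    hence "c \<noteq> 0" using pCons by simp
    moreover have "c \<in> dr_Fq q" using pCons(4)[rule_format, of 0] by simp
    ultimately show ?thesis using True avFq[OF a q] by simp
  next
    case False
    have cP: "\<forall>i. coeff P i \<in> dr_Fq q"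
    proof
      fix i show "coeff P i \<in> dr_Fq q" using pCons.prems(2)[rule_format, of "Suc i"] by simp
    qed
    have IH: "av (poly P \<theta>) = av \<theta> ^ degree P" using pCons(2)[OF False cP] .
    have "c \<in> dr_Fq q" using pCons(4)[rule_format, of 0] by simp
    hence c1: "av c \<le> 1" using avFq[OF a q] av0[OF a] by (cases "c = 0") auto
    have "av (\<theta> * poly P \<theta>) = av \<theta> ^ Suc (degree P)" using IH avmult[OF a] by simp
    moreover have "1 < av \<theta> ^ Suc (degree P)" by (rule one_less_power[OF th]) simp
    ultimately have "av (c + \<theta> * poly P \<theta>) = av \<theta> ^ Suc (degree P)"
      using avstrict[OF a, of c "\<theta> * poly P \<theta>"] c1 by simp
    thus ?thesis using False by simp
  qed
qed




lemma av_denom: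
  assumes a: "dr_absval av" and th: "1 < av \<theta>" and N: "2 \<le> N"
  shows "1 \<le> av (\<theta> ^ N - \<theta>)"
proof -
  have "av \<theta> ^ 1 < av \<theta> ^ N" using th N by (intro power_strict_increasing) auto
  hence lt: "av (-\<theta>) < av (\<theta> ^ N)" using avneg[OF a] avpow[OF a] by simp
  have "av (-\<theta> + \<theta> ^ N) = av (\<theta> ^ N)" by (rule avstrict[OF a lt])
  thus ?thesis using lt th avneg[OF a, of \<theta>] by simp
qed

lemma coeff_bound:
  assumes a: "dr_absval av" and th: "1 < av \<theta>" and q: "2 \<le> q"
    and M: "1 \<le> M" and kM: "\<forall>j\<in>{1..r}. av (\<kappa> j) \<le> M"
  shows "av (dexp_coeff q \<theta> r \<kappa> i) \<le> M ^ (q ^ i - 1)"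
proof (induction i rule: less_induct)
  case (less i)
  show ?case
  proof (cases i)
    case 0 thus ?thesis using av1[OF a] by simp
  next
    case (Suc k)
    define S where "S = (\<Sum>j\<in>{1..min (Suc k) r}. \<kappa> j * (dexp_coeff q \<theta> r \<kappa> (Suc k - j)) ^ (q ^ j))"
    define d where "d = \<theta> ^ (q ^ Suc k) - \<theta>"
    have eq: "dexp_coeff q \<theta> r \<kappa> (Suc k) = S / d" unfolding S_def d_def by (simp only: dexp_coeff.simps)
    have qk: "2 \<le> q ^ Suc k"
    proof -
      have "q ^ 1 \<le> q ^ Suc k" using q by (intro power_increasing) auto
      thus ?thesis using q by (metis power_one_right le_trans)
    qed
    have d1: "1 \<le> av d" unfolding d_def by (rule av_denom[OF a th qk])
    have MP: "0 \<le> M ^ (q ^ Suc k - 1)" using M by simp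
    have termb: "av (\<kappa> j * (dexp_coeff q \<theta> r \<kappa> (Suc k - j)) ^ (q ^ j)) \<le> M ^ (q ^ Suc k - 1)"
      if j: "j \<in> {1..min (Suc k) r}" for j
    proof -
      have j1: "1 \<le> j" "j \<le> Suc k" "j \<le> r" using j by auto
      have IH: "av (dexp_coeff q \<theta> r \<kappa> (Suc k - j)) \<le> M ^ (q ^ (Suc k - j) - 1)"
        using less[of "Suc k - j"] Suc j1 by simp
      have kj: "av (\<kappa> j) \<le> M" using kM j1 by auto
      define A where "A = q ^ (Suc k - j)"
      define B where "B = q ^ j"
      have AB: "A * B = q ^ Suc k" unfolding A_def B_def using j1 by (simp flip: power_add)
      have A1: "1 \<le> A" unfolding A_def using q by simp
      have B2: "2 \<le> B"
      proof -
        have "q ^ 1 \<le> q ^ j" using q j1 by (intro power_increasing) auto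
        thus ?thesis using q unfolding B_def by (metis power_one_right le_trans)
      qed
      have expo: "1 + (A - 1) * B \<le> A * B - 1"
      proof -
        have "(A - 1) * B = A * B - B" by (simp add: diff_mult_distrib)
        moreover have "B \<le> A * B" using A1 by simp
        ultimately show ?thesis using B2 by linarith
      qed
      have "av (\<kappa> j * (dexp_coeff q \<theta> r \<kappa> (Suc k - j)) ^ (q ^ j))
            = av (\<kappa> j) * av (dexp_coeff q \<theta> r \<kappa> (Suc k - j)) ^ B"
        using avmult[OF a] avpow[OF a] B_def by simp
      also have "\<dots> \<le> M * (M ^ (A - 1)) ^ B"
        using IH kj A_def avnn[OF a] M by (intro mult_mono power_mono) auto
      also have "\<dots> = M ^ (1 + (A - 1) * B)" by (simp add: power_mult)
      also have "\<dots> \<le> M ^ (A * B - 1)" using expo M by (rule power_increasing)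
      finally show ?thesis using AB by simp
    qed
    have "av S \<le> M ^ (q ^ Suc k - 1)" unfolding S_def
      by (rule avsum[OF a _ MP]) (use termb in auto)
    moreover have "av (S / d) \<le> av S"
    proof -
      have "av S * 1 \<le> av S * av d" using d1 avnn[OF a, of S] by (intro mult_left_mono) auto
      thus ?thesis using avdivide[OF a] d1 by (simp add: divide_le_eq)
    qed
    ultimately show ?thesis unfolding Suc eq by (rule order_trans[rotated])
  qed
qed




lemma av_sums_unique:
  assumes a: "dr_absval av" and s1: "av_sums av f s" and s2: "av_sums av f s'"
  shows "s = s'"
proof -
  define S where "S N = (\<Sum>i<N. f i)" for N
  have t: "(\<lambda>N. av (s - S N) + av (s' - S N)) \<longlonglongrightarrow> 0 + 0"
    using s1 s2 unfolding av_sums_def S_def by (intro tendsto_add)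
  have le: "av (s - s') \<le> av (s - S N) + av (s' - S N)" for N
  proof -
    have "av ((s - S N) - (s' - S N)) \<le> max (av (s - S N)) (av (s' - S N))" by (rule avdiff[OF a])
    thus ?thesis using avnn[OF a, of "s - S N"] avnn[OF a, of "s' - S N"] by simp
  qed
  have "av (s - s') \<le> 0" using t le by (intro LIMSEQ_le_const[of _ 0]) auto
  hence "av (s - s') = 0" using avnn[OF a, of "s - s'"] by simp
  thus ?thesis using aveq0[OF a] by simp
qed

lemma dexp_bound:
  assumes a: "dr_absval av" and comp: "dr_complete av" and th: "1 < av \<theta>" and q: "2 \<le> q"
    and M: "1 \<le> M" and kM: "\<forall>j\<in>{1..r}. av (\<kappa> j) \<le> M"
    and y1: "M * av z < 1"
  shows "av (dexp q \<theta> av r \<kappa> z - z) \<le> (M * av z) ^ q"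
proof -
  define T where "T i = dexp_coeff q \<theta> r \<kappa> i * z ^ (q ^ i)" for i
  define y where "y = M * av z"
  define S where "S N = (\<Sum>i<N. T i)" for N
  have y0: "0 \<le> y" unfolding y_def using M avnn[OF a, of z] by simp
  have y1': "y \<le> 1" using y1 unfolding y_def by simp
  have Tb: "av (T i) \<le> y ^ (q ^ i)" for i
  proof -
    have "av (T i) = av (dexp_coeff q \<theta> r \<kappa> i) * av z ^ (q ^ i)"
      unfolding T_def using avmult[OF a] avpow[OF a] by simp
    also have "\<dots> \<le> M ^ (q ^ i - 1) * av z ^ (q ^ i)"
      using coeff_bound[OF a th q M kM, of i] avnn[OF a, of z] by (intro mult_right_mono) auto
    also have "\<dots> \<le> M ^ (q ^ i) * av z ^ (q ^ i)"
      using M avnn[OF a, of z] by (intro mult_right_mono power_increasing) auto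
    also have "\<dots> = y ^ (q ^ i)" unfolding y_def by (simp add: power_mult_distrib)
    finally show ?thesis .
  qed
  have Ti: "y ^ (q ^ i) \<le> y ^ i" for i
  proof -
    have "i < 2 ^ i" by (rule less_exp)
    also have "(2::nat) ^ i \<le> q ^ i" using q by (rule power_mono) simp
    finally have "i \<le> q ^ i" by simp
    thus ?thesis using y0 y1' by (rule power_decreasing)
  qed
  have Tq: "y ^ (q ^ i) \<le> y ^ q" if "1 \<le> i" for i
  proof -
    have "q ^ 1 \<le> q ^ i" using q that by (intro power_increasing) auto
    hence "q \<le> q ^ i" by simp
    thus ?thesis using y0 y1' by (rule power_decreasing)
  qed
  have cauchy1: "av (S m - S n) \<le> y ^ n" if "n \<le> m" for m n
  proof -
    have "sum T {0..<n} + sum T {n..<m} = sum T {0..<m}"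
      using that by (intro sum.atLeastLessThan_concat) auto
    hence "S m - S n = sum T {n..<m}" unfolding S_def by (simp add: lessThan_atLeast0 algebra_simps)
    moreover have "av (sum T {n..<m}) \<le> y ^ n"
    proof (rule avsum[OF a])
      show "0 \<le> y ^ n" using y0 by simp
      show "\<forall>s\<in>{n..<m}. av (T s) \<le> y ^ n"
      proof
        fix s assume "s \<in> {n..<m}"
        hence "y ^ s \<le> y ^ n" using y0 y1' by (intro power_decreasing) auto
        thus "av (T s) \<le> y ^ n" using Tb[of s] Ti[of s] by linarith
      qed
    qed simp
    ultimately show ?thesis by simp
  qed
  have "\<exists>L. (\<lambda>n. av (S n - L)) \<longlonglongrightarrow> 0"
  proof -
    have "\<forall>\<epsilon>>0. \<exists>N. \<forall>m\<ge>N. \<forall>n\<ge>N. av (S m - S n) < \<epsilon>"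
    proof (intro allI impI)
      fix \<epsilon> :: real assume e: "0 < \<epsilon>"
      have "y < 1" using y1 unfolding y_def .
      then obtain N where N: "y ^ N < \<epsilon>" using real_arch_pow_inv e by blast
      show "\<exists>N. \<forall>m\<ge>N. \<forall>n\<ge>N. av (S m - S n) < \<epsilon>"
      proof (intro exI allI impI)
        fix m n assume m: "N \<le> m" and n: "N \<le> n"
        show "av (S m - S n) < \<epsilon>"
        proof (cases "n \<le> m")
          case True
          have "y ^ n \<le> y ^ N" using y0 y1' n by (intro power_decreasing) auto
          thus ?thesis using cauchy1[OF True] N by linarith
        next
          case False
          have "y ^ m \<le> y ^ N" using y0 y1' m by (intro power_decreasing) auto
          thus ?thesis using cauchy1[of m n] False N avcomm[OF a, of "S m" "S n"] by simp
        qed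
      qed
    qed
    thus ?thesis using comp unfolding dr_complete_def by blast
  qed
  then obtain L where L: "(\<lambda>n. av (S n - L)) \<longlonglongrightarrow> 0" by blast
  have sums: "av_sums av T L"
    unfolding av_sums_def using L avcomm[OF a] unfolding S_def by simp
  have dz: "dexp q \<theta> av r \<kappa> z = L"
    unfolding dexp_def
  proof (rule the_equality)
    show "av_sums av (\<lambda>i. dexp_coeff q \<theta> r \<kappa> i * z ^ q ^ i) L" using sums unfolding T_def by simp
    show "\<And>s. av_sums av (\<lambda>i. dexp_coeff q \<theta> r \<kappa> i * z ^ q ^ i) s \<Longrightarrow> s = L"
      using av_sums_unique[OF a _ sums] unfolding T_def by blast
  qed
  have "av (L - z) \<le> y ^ q"
  proof (rule ccontr)
    assume "\<not> av (L - z) \<le> y ^ q"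
    hence gt: "y ^ q < av (L - z)" by simp
    have "\<exists>no. \<forall>n\<ge>no. norm (av (S n - L) - 0) < av (L - z) - y ^ q"
      using L gt unfolding LIMSEQ_iff by simp
    then obtain N0 where N0': "\<forall>n\<ge>N0. norm (av (S n - L) - 0) < av (L - z) - y ^ q" by blast
    have N0: "\<forall>n\<ge>N0. av (S n - L) < av (L - z) - y ^ q"
      using N0' avnn[OF a] by simp
    have e1: "av (L - S (Suc N0)) < av (L - z) - y ^ q"
      using N0 avcomm[OF a, of L "S (Suc N0)"] by simp
    have "S (Suc N0) = T 0 + (\<Sum>i<N0. T (Suc i))" unfolding S_def by (rule sum.lessThan_Suc_shift)
    moreover have "T 0 = z" unfolding T_def by simp
    ultimately have sz: "S (Suc N0) - z = (\<Sum>i<N0. T (Suc i))" by simp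
    have e2: "av (S (Suc N0) - z) \<le> y ^ q"
      unfolding sz
    proof (rule avsum[OF a])
      show "0 \<le> y ^ q" using y0 by simp
      show "\<forall>s\<in>{..<N0}. av (T (Suc s)) \<le> y ^ q"
      proof
        fix s show "av (T (Suc s)) \<le> y ^ q" using Tb[of "Suc s"] Tq[of "Suc s"] by simp
      qed
    qed simp
    have "av ((L - S (Suc N0)) + (S (Suc N0) - z)) \<le> max (av (L - S (Suc N0))) (av (S (Suc N0) - z))"
      by (rule avadd[OF a])
    hence "av (L - z) \<le> max (av (L - S (Suc N0))) (av (S (Suc N0) - z))" by simp
    thus False using e1 e2 gt y0 avnn[OF a, of "S (Suc N0) - z"] by (simp add: max_def split: if_splits)
  qed
  thus ?thesis using dz unfolding y_def by simp
qed




lemma poly_as_sum: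
  fixes P :: "'a::field poly"
  assumes "degree P < D" shows "poly P x = (\<Sum>j<D. coeff P j * x ^ j)"
proof -
  have "poly P x = (\<Sum>j\<le>degree P. coeff P j * x ^ j)" by (rule poly_altdef)
  also have "\<dots> = (\<Sum>j<D. coeff P j * x ^ j)"
    using assms by (intro sum.mono_neutral_left) (auto simp: coeff_eq_0)
  finally show ?thesis .
qed

lemma analytic:
  fixes A :: "nat \<Rightarrow> 'c::field poly"
  assumes a: "dr_absval av" and comp: "dr_complete av" and th: "1 < av \<theta>" and q: "2 \<le> q"
    and M: "1 \<le> M" and kM: "\<forall>j\<in>{1..r}. av (\<kappa> j) \<le> M"
    and deg: "\<forall>i<n. degree (A i) < D"
    and ce: "\<forall>m\<ge>D. (\<Sum>i<n. \<Sum>j<D. coeff (A i) j * dexp q \<theta> av r \<kappa> (u i / \<theta> ^ (m - j + 1))) = 0"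
  shows "(\<Sum>i<n. poly (A i) \<theta> * u i) = 0"
proof (rule ccontr)
  define W where "W = (\<Sum>i<n. poly (A i) \<theta> * u i)"
  assume "(\<Sum>i<n. poly (A i) \<theta> * u i) \<noteq> 0"
  hence Wnz: "W \<noteq> 0" unfolding W_def .
  define U where "U = 1 + (\<Sum>i<n. av (u i))"
  define Am where "Am = 1 + (\<Sum>i<n. \<Sum>j<D. av (coeff (A i) j))"
  define t where "t = av \<theta>"
  define K where "K = M * U * t ^ D"
  define w where "w = av W"
  have t1: "1 < t" using th t_def by simp
  have U1: "1 \<le> U" unfolding U_def using avnn[OF a] by (simp add: sum_nonneg)
  have Uge: "av (u i) \<le> U" if "i < n" for i
  proof -
    have "av (u i) \<le> (\<Sum>i<n. av (u i))"
      using that avnn[OF a] by (intro member_le_sum) auto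
    thus ?thesis unfolding U_def by simp
  qed
  have Am1: "1 \<le> Am" unfolding Am_def using avnn[OF a] by (simp add: sum_nonneg)
  have Amge: "av (coeff (A i) j) \<le> Am" if "i < n" "j < D" for i j
  proof -
    have "av (coeff (A i) j) \<le> (\<Sum>j<D. av (coeff (A i) j))"
      using that avnn[OF a] by (intro member_le_sum) auto
    also have "\<dots> \<le> (\<Sum>i<n. \<Sum>j<D. av (coeff (A i) j))"
      using that avnn[OF a] by (intro member_le_sum sum_nonneg) auto
    finally show ?thesis unfolding Am_def by simp
  qed
  have K0: "0 \<le> K" unfolding K_def using M U1 t1 by simp
  have w0: "0 < w" unfolding w_def using Wnz aveq0[OF a, of W] avnn[OF a, of W] by (simp add: less_le)
  define \<epsilon> where "\<epsilon> = min (w / (Am * K ^ 2 + 1)) (1 / (K + 1))"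
  have AK0: "0 \<le> Am * K ^ 2" using Am1 K0 by simp
  have e0: "0 < \<epsilon>" unfolding \<epsilon>_def using w0 AK0 K0 by simp
  have it1: "1 / t < 1" using t1 by simp
  obtain N where N: "(1 / t) ^ N < \<epsilon>" using real_arch_pow_inv[OF e0 it1] by blast
  define m where "m = max D N"
  define x where "x = (1 / t) ^ (m + 1)"
  have x0: "0 < x" unfolding x_def using t1 by simp
  have "x \<le> (1 / t) ^ N" unfolding x_def m_def using t1 by (intro power_decreasing) auto
  hence xe: "x < \<epsilon>" using N by simp
  have Kx: "K * x < 1"
  proof -
    have "K * x \<le> K * (1 / (K + 1))" using xe K0 unfolding \<epsilon>_def by (intro mult_left_mono) auto
    also have "\<dots> < 1" using K0 by (simp add: field_simps)
    finally show ?thesis .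
  qed
  have big: "Am * K ^ 2 * x < w"
  proof -
    have "Am * K ^ 2 * x \<le> Am * K ^ 2 * (w / (Am * K ^ 2 + 1))"
      using xe AK0 unfolding \<epsilon>_def by (intro mult_left_mono) auto
    also have "\<dots> < w" using AK0 w0 by (simp add: field_simps)
    finally show ?thesis .
  qed
  have mD: "D \<le> m" unfolding m_def by simp
  define z where "z i j = u i / \<theta> ^ (m - j + 1)" for i j
  have thnz: "\<theta> \<noteq> 0" using th av0[OF a] by auto
  have avz: "av (z i j) \<le> U * t ^ D * x" if "i < n" "j < D" for i j
  proof -
    have jm: "j \<le> m" using that mD by simp
    have e: "t ^ (m + 1) = t ^ j * t ^ (m - j + 1)" using jm by (simp flip: power_add)
    have "av (z i j) = av (u i) / t ^ (m - j + 1)"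
      unfolding z_def t_def by (simp only: avdivide[OF a] avpow[OF a])
    also have "\<dots> = av (u i) * t ^ j * x"
      unfolding x_def using e t1 by (simp add: power_one_over field_simps)
    also have "\<dots> \<le> U * t ^ D * x"
      using Uge[OF that(1)] t1 that(2) x0 avnn[OF a, of "u i"]
      by (intro mult_right_mono mult_mono power_increasing) auto
    finally show ?thesis .
  qed
  have err: "av (coeff (A i) j * (z i j - dexp q \<theta> av r \<kappa> (z i j))) \<le> Am * K ^ 2 * x ^ 2"
    if ij: "i < n" "j < D" for i j
  proof -
    have Mz: "M * av (z i j) \<le> K * x"
      using avz[OF ij] M unfolding K_def by (metis mult.assoc mult_left_mono order_trans zero_le_one)
    hence Mz1: "M * av (z i j) < 1" using Kx by simp
    have Mz0: "0 \<le> M * av (z i j)" using M avnn[OF a] by simp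
    have "av (dexp q \<theta> av r \<kappa> (z i j) - z i j) \<le> (M * av (z i j)) ^ q"
      by (rule dexp_bound[OF a comp th q M kM Mz1])
    also have "\<dots> \<le> (M * av (z i j)) ^ 2"
      using Mz0 Mz1 q by (intro power_decreasing) auto
    also have "\<dots> \<le> (K * x) ^ 2" using Mz Mz0 by (intro power_mono) auto
    finally have d: "av (z i j - dexp q \<theta> av r \<kappa> (z i j)) \<le> K ^ 2 * x ^ 2"
      using avcomm[OF a] by (simp add: power_mult_distrib)
    have "av (coeff (A i) j * (z i j - dexp q \<theta> av r \<kappa> (z i j)))
          = av (coeff (A i) j) * av (z i j - dexp q \<theta> av r \<kappa> (z i j))" by (rule avmult[OF a])
    also have "\<dots> \<le> Am * (K ^ 2 * x ^ 2)"
      using Amge[OF ij] d avnn[OF a] Am1 by (intro mult_mono) auto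
    finally show ?thesis by simp
  qed
  have AKx: "0 \<le> Am * K ^ 2 * x ^ 2" using AK0 x0 by simp
  have sumb: "av (\<Sum>i<n. \<Sum>j<D. coeff (A i) j * (z i j - dexp q \<theta> av r \<kappa> (z i j))) \<le> Am * K ^ 2 * x ^ 2"
    using err AKx by (intro avsum[OF a] ballI) (auto intro: avsum[OF a])
  have "(\<Sum>i<n. \<Sum>j<D. coeff (A i) j * (z i j - dexp q \<theta> av r \<kappa> (z i j)))
        = (\<Sum>i<n. \<Sum>j<D. coeff (A i) j * z i j) - (\<Sum>i<n. \<Sum>j<D. coeff (A i) j * dexp q \<theta> av r \<kappa> (z i j))"
    by (simp add: algebra_simps sum_subtractf)
  also have "(\<Sum>i<n. \<Sum>j<D. coeff (A i) j * dexp q \<theta> av r \<kappa> (z i j)) = 0"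
    using ce mD unfolding z_def by blast
  also have "(\<Sum>i<n. \<Sum>j<D. coeff (A i) j * z i j) = W / \<theta> ^ (m + 1)"
  proof -
    have "coeff (A i) j * z i j = coeff (A i) j * \<theta> ^ j * u i / \<theta> ^ (m + 1)" if "j < D" for i j
    proof -
      have "\<theta> ^ (m + 1) = \<theta> ^ j * \<theta> ^ (m - j + 1)" using that mD by (simp flip: power_add)
      thus ?thesis unfolding z_def using thnz by (simp add: field_simps)
    qed
    hence "(\<Sum>i<n. \<Sum>j<D. coeff (A i) j * z i j) = (\<Sum>i<n. \<Sum>j<D. coeff (A i) j * \<theta> ^ j * u i / \<theta> ^ (m + 1))"
      by simp
    also have "\<dots> = (\<Sum>i<n. poly (A i) \<theta> * u i / \<theta> ^ (m + 1))"
    proof (rule sum.cong[OF refl])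
      fix i assume "i \<in> {..<n}"
      hence "poly (A i) \<theta> = (\<Sum>j<D. coeff (A i) j * \<theta> ^ j)" using deg poly_as_sum by auto
      thus "(\<Sum>j<D. coeff (A i) j * \<theta> ^ j * u i / \<theta> ^ (m + 1)) = poly (A i) \<theta> * u i / \<theta> ^ (m + 1)"
        by (simp add: sum_distrib_right sum_divide_distrib)
    qed
    also have "\<dots> = (\<Sum>i<n. poly (A i) \<theta> * u i) / \<theta> ^ (m + 1)"
      by (simp add: sum_divide_distrib)
    finally show ?thesis unfolding W_def .
  qed
  finally have eqW: "(\<Sum>i<n. \<Sum>j<D. coeff (A i) j * (z i j - dexp q \<theta> av r \<kappa> (z i j))) = W / \<theta> ^ (m + 1)"
    by simp
  have "av (W / \<theta> ^ (m + 1)) = av W / av \<theta> ^ (m + 1)" by (simp only: avdivide[OF a] avpow[OF a])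
  also have "\<dots> = w * x" unfolding w_def x_def t_def by (simp add: power_one_over)
  finally have "av (W / \<theta> ^ (m + 1)) = w * x" .
  hence "w * x \<le> Am * K ^ 2 * x ^ 2" using sumb eqW by simp
  hence "w \<le> Am * K ^ 2 * x" using x0 by (simp add: power2_eq_square)
  thus False using big by simp
qed




lemma fps_to_fls_sum: "fps_to_fls (\<Sum>i\<in>S. f i) = (\<Sum>i\<in>S. fps_to_fls (f i))"
  by (induction S rule: infinite_finite_induct) auto

theorem lemma3p5:
  fixes p e q r n :: nat and \<theta> :: "'c::field" and av :: "'c \<Rightarrow> real"
    and \<kappa> :: "nat \<Rightarrow> 'c" and u :: "nat \<Rightarrow> 'c"
  assumes "Cinf_model p e q \<theta> av"
    and "drinfeld_data q \<theta> r \<kappa>"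
    and "\<forall>c::nat \<Rightarrow> 'c. (\<forall>i<n. c i \<in> dr_k q \<theta>) \<and> (\<Sum>i<n. c i * u i) = 0
           \<longrightarrow> (\<forall>i<n. c i = 0)"
  shows "\<forall>c::nat \<Rightarrow> 'c fls. (\<forall>i<n. c i \<in> dr_Fqt q)
           \<and> (\<Sum>i<n. c i * fps_to_fls (f_u q \<theta> av r \<kappa> (u i))) = 0
           \<longrightarrow> (\<forall>i<n. c i = 0)"
proof (rule allI, rule impI, elim conjE)
  fix c :: "nat \<Rightarrow> 'c fls"
  assume cF: "\<forall>i<n. c i \<in> dr_Fqt q"
    and sumz: "(\<Sum>i<n. c i * fps_to_fls (f_u q \<theta> av r \<kappa> (u i))) = 0"
  have a: "dr_absval av" and comp: "dr_complete av" and th: "1 < av \<theta>"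
    and pr: "prime p" and e0: "0 < e" and qpe: "q = p ^ e"
    using assms(1) unfolding Cinf_model_def by auto
  have q: "2 \<le> q"
  proof -
    have "2 \<le> p" using pr by (rule prime_ge_2_nat)
    moreover have "p \<le> p ^ e" using e0 \<open>2 \<le> p\<close> by (intro self_le_power) auto
    ultimately show ?thesis using qpe by simp
  qed
  define M where "M = 1 + (\<Sum>j\<in>{1..r}. av (\<kappa> j))"
  have M: "1 \<le> M" unfolding M_def using avnn[OF a] by (simp add: sum_nonneg)
  have kM: "\<forall>j\<in>{1..r}. av (\<kappa> j) \<le> M"
  proof
    fix j assume "j \<in> {1..r}"
    hence "av (\<kappa> j) \<le> (\<Sum>j\<in>{1..r}. av (\<kappa> j))" using avnn[OF a] by (intro member_le_sum) auto
    thus "av (\<kappa> j) \<le> M" unfolding M_def by simp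
  qed
  define X where "X pp = fps_to_fls (fps_of_poly pp)" for pp :: "'c poly"
  have Xmult: "X (p1 * p2) = X p1 * X p2" for p1 p2
    unfolding X_def by (simp add: fps_of_poly_mult fls_times_fps_to_fls)
  have Xz: "X p1 = 0 \<longleftrightarrow> p1 = 0" for p1
    unfolding X_def by (metis fps_of_poly_0 fps_of_poly_eq_iff fps_to_fls_eq_0_iff)
  define Q where "Q i ab \<longleftrightarrow> c i = X (fst ab) / X (snd ab) \<and> (\<forall>j. coeff (fst ab) j \<in> dr_Fq q)
      \<and> (\<forall>j. coeff (snd ab) j \<in> dr_Fq q) \<and> snd ab \<noteq> 0" for i ab
  have "\<forall>i. \<exists>ab. i < n \<longrightarrow> Q i ab"
  proof
    fix i show "\<exists>ab. i < n \<longrightarrow> Q i ab"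
    proof (cases "i < n")
      case True
      then obtain a1 b1 where "c i = X a1 / X b1" "\<forall>j. coeff a1 j \<in> dr_Fq q" "\<forall>j. coeff b1 j \<in> dr_Fq q" "b1 \<noteq> 0"
        using cF unfolding dr_Fqt_def X_def by blast
      hence "Q i (a1, b1)" unfolding Q_def by simp
      thus ?thesis by blast
    qed simp
  qed
  then obtain g where g: "\<forall>i. i < n \<longrightarrow> Q i (g i)" using choice by metis
  define ap where "ap i = fst (g i)" for i
  define bp where "bp i = snd (g i)" for i
  have cab: "c i = X (ap i) / X (bp i)" and aF: "\<forall>j. coeff (ap i) j \<in> dr_Fq q"
    and bF: "\<forall>j. coeff (bp i) j \<in> dr_Fq q" and bnz: "bp i \<noteq> 0" if "i < n" for i
    using g that unfolding Q_def ap_def bp_def by auto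
  define Bp where "Bp = (\<Prod>l<n. bp l)"
  define Oth where "Oth i = (\<Prod>l\<in>{..<n} - {i}. bp l)" for i
  define A where "A i = ap i * Oth i" for i
  have Bsplit: "Bp = bp i * Oth i" if "i < n" for i
    unfolding Bp_def Oth_def using that by (intro prod.remove) auto
  have cA: "c i * X Bp = X (A i)" if "i < n" for i
  proof -
    have "X (bp i) \<noteq> 0" using bnz[OF that] Xz by simp
    hence "X (ap i) / X (bp i) * (X (bp i) * X (Oth i)) = X (ap i) * X (Oth i)" by simp
    thus ?thesis using cab[OF that] Bsplit[OF that] unfolding A_def by (simp add: Xmult)
  qed
  define Fs where "Fs i = f_u q \<theta> av r \<kappa> (u i)" for i
  have "fps_to_fls (\<Sum>i<n. fps_of_poly (A i) * Fs i) = (\<Sum>i<n. X (A i) * fps_to_fls (Fs i))"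
    unfolding X_def by (simp add: fps_to_fls_sum fls_times_fps_to_fls)
  also have "\<dots> = (\<Sum>i<n. X Bp * (c i * fps_to_fls (Fs i)))"
    by (rule sum.cong[OF refl]) (simp add: cA[symmetric] mult_ac)
  also have "\<dots> = X Bp * (\<Sum>i<n. c i * fps_to_fls (Fs i))" by (simp add: sum_distrib_left)
  also have "\<dots> = 0" using sumz unfolding Fs_def by simp
  finally have fsum: "(\<Sum>i<n. fps_of_poly (A i) * Fs i) = 0" by simp
  define D where "D = Suc (\<Sum>i<n. degree (A i))"
  have deg: "\<forall>i<n. degree (A i) < D"
  proof (intro allI impI)
    fix i assume "i < n"
    hence "degree (A i) \<le> (\<Sum>i<n. degree (A i))" by (intro member_le_sum) auto
    thus "degree (A i) < D" unfolding D_def by simp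
  qed
  have ce: "\<forall>m\<ge>D. (\<Sum>i<n. \<Sum>j<D. coeff (A i) j * dexp q \<theta> av r \<kappa> (u i / \<theta> ^ (m - j + 1))) = 0"
  proof (intro allI impI)
    fix m assume mD: "D \<le> m"
    have "0 = (\<Sum>i<n. fps_of_poly (A i) * Fs i) $ m" using fsum by simp
    also have "\<dots> = (\<Sum>i<n. \<Sum>j=0..m. coeff (A i) j * dexp q \<theta> av r \<kappa> (u i / \<theta> ^ (m - j + 1)))"
      unfolding fps_sum_nth fps_mult_nth Fs_def f_u_def by simp
    also have "\<dots> = (\<Sum>i<n. \<Sum>j<D. coeff (A i) j * dexp q \<theta> av r \<kappa> (u i / \<theta> ^ (m - j + 1)))"
    proof (rule sum.cong[OF refl])
      fix i assume i: "i \<in> {..<n}"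
      show "(\<Sum>j=0..m. coeff (A i) j * dexp q \<theta> av r \<kappa> (u i / \<theta> ^ (m - j + 1)))
          = (\<Sum>j<D. coeff (A i) j * dexp q \<theta> av r \<kappa> (u i / \<theta> ^ (m - j + 1)))"
        using deg i mD by (intro sum.mono_neutral_right) (auto simp: coeff_eq_0)
    qed
    finally show "(\<Sum>i<n. \<Sum>j<D. coeff (A i) j * dexp q \<theta> av r \<kappa> (u i / \<theta> ^ (m - j + 1))) = 0" by simp
  qed
  have W0: "(\<Sum>i<n. poly (A i) \<theta> * u i) = 0"
    by (rule analytic[OF a comp th q M kM deg ce])
  have pnz: "poly P \<theta> \<noteq> 0" if "P \<noteq> 0" "\<forall>j. coeff P j \<in> dr_Fq q" for P
  proof -
    have "av (poly P \<theta>) = av \<theta> ^ degree P" by (rule avpoly[OF a q th that])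
    hence "av (poly P \<theta>) \<noteq> 0" using th by simp
    thus ?thesis using av0[OF a] by auto
  qed
  define \<beta> where "\<beta> = (\<Prod>l<n. poly (bp l) \<theta>)"
  have bpnz: "poly (bp i) \<theta> \<noteq> 0" if "i < n" for i using pnz bnz[OF that] bF[OF that] by blast
  have \<beta>nz: "\<beta> \<noteq> 0" unfolding \<beta>_def using bpnz by (simp add: prod_zero_iff)
  define cc where "cc i = poly (ap i) \<theta> / poly (bp i) \<theta>" for i
  have polyA: "poly (A i) \<theta> = cc i * \<beta>" if "i < n" for i
  proof -
    have "\<beta> = poly Bp \<theta>" unfolding \<beta>_def Bp_def by (simp add: poly_prod)
    also have "\<dots> = poly (bp i) \<theta> * poly (Oth i) \<theta>" using Bsplit[OF that] by simp
    finally show ?thesis unfolding A_def cc_def using bpnz[OF that] by simp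
  qed
  have "(\<Sum>i<n. poly (A i) \<theta> * u i) = \<beta> * (\<Sum>i<n. cc i * u i)"
    by (simp add: sum_distrib_left polyA mult_ac)
  hence ccsum: "(\<Sum>i<n. cc i * u i) = 0" using W0 \<beta>nz by simp
  have cck: "\<forall>i<n. cc i \<in> dr_k q \<theta>"
    unfolding cc_def dr_k_def using aF bF bnz by blast
  have cc0: "\<forall>i<n. cc i = 0" using assms(3) ccsum cck by blast
  show "\<forall>i<n. c i = 0"
  proof (intro allI impI)
    fix i assume i: "i < n"
    have "poly (ap i) \<theta> = 0" using cc0 i bpnz[OF i] unfolding cc_def by auto
    hence "ap i = 0" using pnz aF[OF i] by blast
    thus "c i = 0" using cab[OF i] unfolding X_def by simp
  qed
qed


end
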